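(* Let $P$ be a program and let $\tau = \alpha \cdot \mathit{issue}(p,t)\cdot \beta\cdot \mathit{com}(p,t)$ be a minimal anomaly of $P$ such that $\mathit{issue}(p,t)$ happens before $\mathit{com}(p,t)$ through $\beta$. Then no event $a$ in $\beta$ writes to a shared variable that $\mathit{com}(p,t)$ writes to.
   Context: Programs: parallel compositions of processes, each a sequence of transactions (reads of shared variables into registers, writes of register expressions to shared variables, assume statements, delimited by begin and commit). Snapshot isolation (SI): a transaction reads/writes a local snapshot of the central memory taken at its begin and can commit (publishing its writes) only if no transaction committed after its begin wrote a variable it writes. Serializability: every transaction executes atomically. Traces: each transaction $t$ of process $p$ yields an issue event $\mathit{issue}(p,t)$ (begin, reads, local writes) and a commit event $\mathit{com}(p,t)$ (which performs the writes of $t$ on the central memory). Dependencies: $\mathsf{po}$ (program order), $\mathsf{rf}$ (write-read), $\mathsf{st}$ (store order between writes to the same variable), $\mathsf{cf}$ (conflict: a read does not see a write to the same variable that would affect it if visible), and issue-to-commit of the same transaction; $\mathsf{hb}^1$ is their union, $\mathsf{hb}$ its transitive closure. An anomaly of $P$ is a trace of an SI execution of $P$ that is not a trace of any serializable execution. "$a$ happens before $b$ through $\beta$" in a trace $\alpha\cdot a\cdot\beta\cdot b\cdot\gamma$ means there is a nonempty subsequence $c_1\cdots c_n$ of $\beta$ with $c_i\to_{\mathsf{hb}^1}c_{i+1}$ for all $i\in[0,n]$, $c_0=a$, $c_{n+1}=b$. A transaction is delayed in a trace if its issue happens before its commit through the events between them; an anomaly is minimal if it has the least number of delayed transactions among all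 anomalies of $P$. *)

theory Defs
  imports Main "HOL-Library.Sublist"
begin

datatype ('v, 'r, 'd) instr =
    Read 'r 'v
  | Write 'v "('r \<Rightarrow> 'd) \<Rightarrow> 'd"
  | Assume "('r \<Rightarrow> 'd) \<Rightarrow> bool"

text \<open>A program: each process is a sequence of transactions (each transaction a
list of instructions, implicitly delimited by begin/commit); plus initial values of
shared variables and registers.\<close>

record ('p, 'v, 'r, 'd) prog =
  code     :: "'p \<Rightarrow> ('v, 'r, 'd) instr list list"
  init_mem :: "'v \<Rightarrow> 'd"
  init_reg :: "'p \<Rightarrow> 'r \<Rightarrow> 'd"

definition wf_prog :: "('p, 'v, 'r, 'd) prog \<Rightarrow> bool" where
  "wf_prog P \<longleftrightarrow> finite {p. code P p \<noteq> []}"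

text \<open>A transaction is identified by its process and its index in that process.
The source of a read is the transaction whose committed write it sees
(None = initial value). An issue event records, for every variable read from the
snapshot (i.e. not after a local write to it), its source. A commit event records
the set of shared variables it writes.\<close>

type_synonym 'p tid = "'p \<times> nat"
type_synonym 'p src = "'p tid option"

datatype ('p, 'v) event =
    Iss 'p nat "'v \<Rightarrow> 'p src option"
  | Com 'p nat "'v set"

fun tid :: "('p, 'v) event \<Rightarrow> 'p tid" where
  "tid (Iss p i _) = (p, i)"
| "tid (Com p i _) = (p, i)"

fun is_iss :: "('p, 'v) event \<Rightarrow> bool" where
  "is_iss (Iss _ _ _) = True"
| "is_iss (Com _ _ _) = False"

fun is_com :: "('p, 'v) event \<Rightarrow> bool" where
  "is_com (Iss _ _ _) = False"
| "is_com (Com _ _ _) = True"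

fun rdset :: "('p, 'v) event \<Rightarrow> 'v \<Rightarrow> 'p src option" where
  "rdset (Iss _ _ R) = R"
| "rdset (Com _ _ _) = (\<lambda>_. None)"

fun wset :: "('p, 'v) event \<Rightarrow> 'v set" where
  "wset (Iss _ _ _) = {}"
| "wset (Com _ _ W) = W"

record ('p, 'v, 'r, 'd) cfg =
  mem   :: "'v \<Rightarrow> 'd"
  lastw :: "'v \<Rightarrow> 'p src"
  pc    :: "'p \<Rightarrow> nat"
  regs  :: "'p \<Rightarrow> 'r \<Rightarrow> 'd"
  pend  :: "'p \<Rightarrow> ('v \<rightharpoonup> 'd) option"
  dirty :: "'p \<Rightarrow> 'v set"

text \<open>Local execution of a transaction on a snapshot (memory m, writers w),
registers, local write buffer L and read-source map R. None = blocked by assume.\<close>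

fun exec_txn :: "('v \<Rightarrow> 'd) \<Rightarrow> ('v \<Rightarrow> 'p src) \<Rightarrow> ('v, 'r, 'd) instr list
    \<Rightarrow> ('r \<Rightarrow> 'd) \<Rightarrow> ('v \<rightharpoonup> 'd) \<Rightarrow> ('v \<Rightarrow> 'p src option)
    \<Rightarrow> (('r \<Rightarrow> 'd) \<times> ('v \<rightharpoonup> 'd) \<times> ('v \<Rightarrow> 'p src option)) option" where
  "exec_txn m w [] \<rho> L R = Some (\<rho>, L, R)"
| "exec_txn m w (Read r x # is) \<rho> L R =
     (case L x of
        Some d \<Rightarrow> exec_txn m w is (\<rho>(r := d)) L R
      | None \<Rightarrow> exec_txn m w is (\<rho>(r := m x)) L (R(x := Some (w x))))"
| "exec_txn m w (Write x e # is) \<rho> L R = exec_txn m w is \<rho> (L(x \<mapsto> e \<rho>)) R"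
| "exec_txn m w (Assume c # is) \<rho> L R = (if c \<rho> then exec_txn m w is \<rho> L R else None)"

text \<open>Issue: begin (take snapshot), execute reads and local writes.
Commit: allowed only if no transaction committed after the issue wrote a variable
that this transaction writes; then publish the writes.\<close>

fun step :: "('p, 'v, 'r, 'd) prog \<Rightarrow> ('p, 'v, 'r, 'd) cfg \<Rightarrow> ('p, 'v) event
    \<Rightarrow> ('p, 'v, 'r, 'd) cfg option" where
  "step P c (Iss p i R) =
     (if pend c p = None \<and> pc c p = i \<and> i < length (code P p) then
        (case exec_txn (mem c) (lastw c) (code P p ! i) (regs c p) Map.empty (\<lambda>_. None) of
           None \<Rightarrow> None
         | Some (\<rho>, L, R') \<Rightarrow>
             (if R' = R then
                Some (c\<lparr>pc := (pc c)(p := Suc i), regs := (regs c)(p := \<rho>),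
                        pend := (pend c)(p := Some L), dirty := (dirty c)(p := {})\<rparr>)
              else None))
      else None)"
| "step P c (Com p i W) =
     (case pend c p of
        None \<Rightarrow> None
      | Some L \<Rightarrow>
          (if pc c p = Suc i \<and> W = dom L \<and> W \<inter> dirty c p = {} then
             Some (c\<lparr>mem := (\<lambda>x. case L x of Some d \<Rightarrow> d | None \<Rightarrow> mem c x),
                     lastw := (\<lambda>x. if x \<in> W then Some (p, i) else lastw c x),
                     pend := (pend c)(p := None),
                     dirty := (\<lambda>q. dirty c q \<union> W)\<rparr>)
           else None))"

fun run :: "('p, 'v, 'r, 'd) prog \<Rightarrow> ('p, 'v, 'r, 'd) cfg \<Rightarrow> ('p, 'v) event list
    \<Rightarrow> ('p, 'v, 'r, 'd) cfg option" where
  "run P c [] = Some c"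
| "run P c (e # es) = (case step P c e of None \<Rightarrow> None | Some c' \<Rightarrow> run P c' es)"

definition init_cfg :: "('p, 'v, 'r, 'd) prog \<Rightarrow> ('p, 'v, 'r, 'd) cfg" where
  "init_cfg P = \<lparr>mem = init_mem P, lastw = (\<lambda>_. None), pc = (\<lambda>_. 0),
                 regs = init_reg P, pend = (\<lambda>_. None), dirty = (\<lambda>_. {})\<rparr>"

definition si_trace :: "('p, 'v, 'r, 'd) prog \<Rightarrow> ('p, 'v) event list \<Rightarrow> bool" where
  "si_trace P \<tau> \<longleftrightarrow> run P (init_cfg P) \<tau> \<noteq> None"

definition ser_trace :: "('p, 'v, 'r, 'd) prog \<Rightarrow> ('p, 'v) event list \<Rightarrow> bool" where
  "ser_trace P \<tau> \<longleftrightarrow> si_trace P \<tau> \<and>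
     (\<forall>k < length \<tau>. is_iss (\<tau> ! k) \<longrightarrow>
        Suc k < length \<tau> \<and> is_com (\<tau> ! Suc k) \<and> tid (\<tau> ! Suc k) = tid (\<tau> ! k))"

definition before :: "('p, 'v) event list \<Rightarrow> ('p, 'v) event \<Rightarrow> ('p, 'v) event \<Rightarrow> bool" where
  "before \<tau> a b \<longleftrightarrow> (\<exists>i j. i < j \<and> j < length \<tau> \<and> \<tau> ! i = a \<and> \<tau> ! j = b)"

definition po :: "('p, 'v) event list \<Rightarrow> ('p, 'v) event \<Rightarrow> ('p, 'v) event \<Rightarrow> bool" where
  "po \<tau> a b \<longleftrightarrow> a \<in> set \<tau> \<and> b \<in> set \<tau> \<and> fst (tid a) = fst (tid b) \<and> snd (tid a) < snd (tid b)"

definition itc :: "('p, 'v) event list \<Rightarrow> ('p, 'v) event \<Rightarrow> ('p, 'v) event \<Rightarrow> bool" where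
  "itc \<tau> a b \<longleftrightarrow> a \<in> set \<tau> \<and> b \<in> set \<tau> \<and> is_iss a \<and> is_com b \<and> tid a = tid b"

definition rf :: "('p, 'v) event list \<Rightarrow> ('p, 'v) event \<Rightarrow> ('p, 'v) event \<Rightarrow> bool" where
  "rf \<tau> a b \<longleftrightarrow> a \<in> set \<tau> \<and> b \<in> set \<tau> \<and> is_com a \<and> is_iss b \<and>
     (\<exists>x. rdset b x = Some (Some (tid a)))"

definition stx :: "('p, 'v) event list \<Rightarrow> 'v \<Rightarrow> ('p, 'v) event \<Rightarrow> ('p, 'v) event \<Rightarrow> bool" where
  "stx \<tau> x a b \<longleftrightarrow> is_com a \<and> is_com b \<and> x \<in> wset a \<and> x \<in> wset b \<and> before \<tau> a b"

definition st :: "('p, 'v) event list \<Rightarrow> ('p, 'v) event \<Rightarrow> ('p, 'v) event \<Rightarrow> bool" where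
  "st \<tau> a b \<longleftrightarrow> (\<exists>x. stx \<tau> x a b)"

definition cf :: "('p, 'v) event list \<Rightarrow> ('p, 'v) event \<Rightarrow> ('p, 'v) event \<Rightarrow> bool" where
  "cf \<tau> a b \<longleftrightarrow> a \<in> set \<tau> \<and> b \<in> set \<tau> \<and> is_iss a \<and> is_com b \<and> tid a \<noteq> tid b \<and>
     (\<exists>x s. rdset a x = Some s \<and> x \<in> wset b \<and>
        (s = None \<or> (\<exists>c. tid c = the s \<and> stx \<tau> x c b)))"

definition hb1 :: "('p, 'v) event list \<Rightarrow> ('p, 'v) event \<Rightarrow> ('p, 'v) event \<Rightarrow> bool" where
  "hb1 \<tau> a b \<longleftrightarrow> po \<tau> a b \<or> rf \<tau> a b \<or> st \<tau> a b \<or> cf \<tau> a b \<or> itc \<tau> a b"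

text \<open>Dependency graph of a trace, restricted to committed transactions
(transactions issued but still pending at the end are discarded).\<close>

definition committed :: "('p, 'v) event list \<Rightarrow> 'p tid set" where
  "committed \<tau> = {tid e | e. e \<in> set \<tau> \<and> is_com e}"

definition cevs :: "('p, 'v) event list \<Rightarrow> ('p, 'v) event set" where
  "cevs \<tau> = {e \<in> set \<tau>. tid e \<in> committed \<tau>}"

definition restr :: "('p, 'v) event list
    \<Rightarrow> (('p, 'v) event list \<Rightarrow> ('p, 'v) event \<Rightarrow> ('p, 'v) event \<Rightarrow> bool)
    \<Rightarrow> (('p, 'v) event \<times> ('p, 'v) event) set" where
  "restr \<tau> r = {(a, b). a \<in> cevs \<tau> \<and> b \<in> cevs \<tau> \<and> r \<tau> a b}"

definition dep_graph :: "('p, 'v) event list \<Rightarrow> ('p, 'v) event set \<times>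
    (('p, 'v) event \<times> ('p, 'v) event) set \<times> (('p, 'v) event \<times> ('p, 'v) event) set \<times>
    (('p, 'v) event \<times> ('p, 'v) event) set \<times> (('p, 'v) event \<times> ('p, 'v) event) set" where
  "dep_graph \<tau> = (cevs \<tau>, restr \<tau> po, restr \<tau> rf, restr \<tau> st, restr \<tau> cf)"

definition anomaly :: "('p, 'v, 'r, 'd) prog \<Rightarrow> ('p, 'v) event list \<Rightarrow> bool" where
  "anomaly P \<tau> \<longleftrightarrow> si_trace P \<tau> \<and> \<not> (\<exists>\<sigma>. ser_trace P \<sigma> \<and> dep_graph \<sigma> = dep_graph \<tau>)"

definition hb_through :: "('p, 'v) event list \<Rightarrow> ('p, 'v) event \<Rightarrow> ('p, 'v) event list
    \<Rightarrow> ('p, 'v) event \<Rightarrow> bool" where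
  "hb_through \<tau> a \<beta> b \<longleftrightarrow> (\<exists>cs. cs \<noteq> [] \<and> subseq cs \<beta> \<and>
     hb1 \<tau> a (hd cs) \<and> hb1 \<tau> (last cs) b \<and>
     (\<forall>k. Suc k < length cs \<longrightarrow> hb1 \<tau> (cs ! k) (cs ! Suc k)))"

definition delayed :: "('p, 'v) event list \<Rightarrow> 'p tid \<Rightarrow> bool" where
  "delayed \<tau> t \<longleftrightarrow> (\<exists>\<alpha> \<beta> \<gamma> R W.
     \<tau> = \<alpha> @ [Iss (fst t) (snd t) R] @ \<beta> @ [Com (fst t) (snd t) W] @ \<gamma> \<and>
     hb_through \<tau> (Iss (fst t) (snd t) R) \<beta> (Com (fst t) (snd t) W))"

definition num_delayed :: "('p, 'v) event list \<Rightarrow> nat" where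
  "num_delayed \<tau> = card {t. delayed \<tau> t}"

definition minimal_anomaly :: "('p, 'v, 'r, 'd) prog \<Rightarrow> ('p, 'v) event list \<Rightarrow> bool" where
  "minimal_anomaly P \<tau> \<longleftrightarrow> anomaly P \<tau> \<and>
     (\<forall>\<tau>'. anomaly P \<tau>' \<longrightarrow> num_delayed \<tau> \<le> num_delayed \<tau>')"

end

theory Submission
  imports Defs
begin

lemma run_append:
  "run P c (xs @ ys) = (case run P c xs of None \<Rightarrow> None | Some c' \<Rightarrow> run P c' ys)"
  by (induction xs arbitrary: c) (auto split: option.splits)

lemma pc_mono:
  "run P c \<beta> = Some c' \<Longrightarrow>
   pc c p \<le> pc c' p \<and> (pend c p = None \<and> pend c' p \<noteq> None \<longrightarrow> pc c p < pc c' p)"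
proof (induction \<beta> arbitrary: c)
  case Nil
  then show ?case by auto
next
  case (Cons e \<beta>)
  then obtain c1 where s: "step P c e = Some c1" and r: "run P c1 \<beta> = Some c'"
    by (auto split: option.splits)
  have "pc c p \<le> pc c1 p \<and> (pend c p = None \<and> pend c1 p \<noteq> None \<longrightarrow> pc c p < pc c1 p)
        \<and> (pend c1 p = None \<longrightarrow> pend c p = None \<or> pc c p \<le> pc c1 p)"
    using s by (cases e) (auto split: option.splits if_splits)
  moreover have "pc c1 p \<le> pc c' p \<and> (pend c1 p = None \<and> pend c' p \<noteq> None \<longrightarrow> pc c1 p < pc c' p)"
    using Cons.IH[OF r] .
  ultimately show ?case by (cases "pend c1 p") auto
qed

lemma no_conflict:
  "run P c \<beta> = Some c' \<Longrightarrow> pc c p = Suc t \<Longrightarrow> pend c p \<noteq> None \<Longrightarrow>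
   step P c' (Com p t W) \<noteq> None \<Longrightarrow>
   dirty c p \<inter> W = {} \<and> (\<forall>a \<in> set \<beta>. wset a \<inter> W = {})"
proof (induction \<beta> arbitrary: c)
  case Nil
  then show ?case by (auto split: option.splits if_splits)
next
  case (Cons e \<beta>)
  then obtain c1 where s: "step P c e = Some c1" and r: "run P c1 \<beta> = Some c'"
    by (auto split: option.splits)
  show ?case
  proof (cases e)
    case (Iss q i R')
    with s Cons.prems have "q \<noteq> p" by (auto split: option.splits if_splits)
    with s Iss have "pc c1 p = pc c p" "pend c1 p = pend c p" "dirty c1 p = dirty c p"
      by (auto split: option.splits if_splits)
    with Cons.IH[OF r] Cons.prems Iss show ?thesis by auto
  next
    case (Com q i W')
    show ?thesis
    proof (cases "q = p")
      case True
      with s Com Cons.prems have "pend c1 p = None" "pc c1 p = Suc t"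
        by (auto split: option.splits if_splits)
      from pc_mono[OF r, of p] this Cons.prems(4) have False
        by (auto split: option.splits if_splits)
      then show ?thesis ..
    next
      case False
      with s Com have "pc c1 p = pc c p" "pend c1 p = pend c p" "dirty c1 p = dirty c p \<union> W'"
        by (auto split: option.splits if_splits)
      with Cons.IH[OF r] Cons.prems Com show ?thesis by auto
    qed
  qed
qed

theorem lemma3:
  fixes P :: "('p, 'v, 'r, 'd) prog"
    and \<alpha> \<beta> :: "('p, 'v) event list"
  assumes "wf_prog P"
    and "minimal_anomaly P \<tau>"
    and "\<tau> = \<alpha> @ [Iss p t R] @ \<beta> @ [Com p t W]"
    and "hb_through \<tau> (Iss p t R) \<beta> (Com p t W)"
  shows "\<forall>a \<in> set \<beta>. wset a \<inter> W = {}"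
proof -
  have "run P (init_cfg P) \<tau> \<noteq> None"
    using assms(2) unfolding minimal_anomaly_def anomaly_def si_trace_def by blast
  hence r: "run P (init_cfg P) (\<alpha> @ (Iss p t R # (\<beta> @ [Com p t W]))) \<noteq> None"
    using assms(3) by simp
  then obtain ca where ra: "run P (init_cfg P) \<alpha> = Some ca"
    and r1: "run P ca (Iss p t R # (\<beta> @ [Com p t W])) \<noteq> None"
    unfolding run_append by (auto split: option.splits)
  then obtain c0 where s0: "step P ca (Iss p t R) = Some c0"
    and r2: "run P c0 (\<beta> @ [Com p t W]) \<noteq> None"
    by (auto simp del: step.simps split: option.splits)
  then obtain c' where rb: "run P c0 \<beta> = Some c'"
    and r3: "run P c' [Com p t W] \<noteq> None"
    unfolding run_append by (auto split: option.splits)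
  hence sc: "step P c' (Com p t W) \<noteq> None"
    by (auto simp del: step.simps split: option.splits)
  from s0 have "pc c0 p = Suc t" "pend c0 p \<noteq> None"
    by (auto split: option.splits if_splits)
  from no_conflict[OF rb this sc] show ?thesis by blast
qed

end
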